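(* Let $J,J',J''\subseteq S$ with $J=J'\cup J''$ and $j'<j''$ for all $j'\in J'$, $j''\in J''$. Then in $A$: $$\tau^+_J=\tau^+_{J'}\tau^+_{J''}+(-1)^{\#J'}q\,\tau^-_{J'}\tau^-_{J''},\qquad \tau^-_J=\tau^-_{J'}\tau^+_{J''}+(-1)^{\#J'}\tau^+_{J'}\tau^-_{J''}.$$
   Context: $S$ is a finite set with a total order $<$, $R$ a commutative ring with $1$, $q\in R$, $A=R\langle t_s\mid s\in S\rangle$ the free associative algebra. For $J=\{j_1<\dots<j_{\#J}\}\subseteq S$, $t_J=t_{j_1}\cdots t_{j_{\#J}}$ ($t_\emptyset=1$); for $I=\{j_{\alpha_1}<\dots<j_{\alpha_{\#I}}\}\subseteq J$, $\ell_J(I)=\sum_{\nu=1}^{\#I}(\alpha_\nu-\nu)$; $\tau^-_J=\sum_{I\subseteq J,\ \#I\text{ odd}}(-1)^{\ell_J(I)}(-q)^{(\#I-1)/2}t_{J\setminus I}$ and $\tau^+_J=\sum_{I\subseteq J,\ \#I\text{ even}}(-1)^{\ell_J(I)}(-q)^{\#I/2}t_{J\setminus I}$ (so $\tau^+_\emptyset=1$, $\tau^-_\emptyset=0$). *)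

theory Defs
  imports Main
begin

text \<open>The free associative algebra R<t_s | s in S> is modelled by its coefficient
functions: an element is a map from words (lists of generators) to coefficients.  All elements considered
here have finite support, i.e. are genuine noncommutative polynomials.\<close>

type_synonym ('a, 'r) ncpoly = "'a list \<Rightarrow> 'r"

definition nc_add :: "('a, 'r::comm_ring_1) ncpoly \<Rightarrow> ('a, 'r) ncpoly \<Rightarrow> ('a, 'r) ncpoly" where
  "nc_add f g = (\<lambda>w. f w + g w)"

definition nc_smult :: "'r::comm_ring_1 \<Rightarrow> ('a, 'r) ncpoly \<Rightarrow> ('a, 'r) ncpoly" where
  "nc_smult c f = (\<lambda>w. c * f w)"

definition nc_mult :: "('a, 'r::comm_ring_1) ncpoly \<Rightarrow> ('a, 'r) ncpoly \<Rightarrow> ('a, 'r) ncpoly" where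
  "nc_mult f g = (\<lambda>w. \<Sum>i\<le>length w. f (take i w) * g (drop i w))"

definition nc_monom :: "'a list \<Rightarrow> ('a, 'r::comm_ring_1) ncpoly" where
  "nc_monom u = (\<lambda>w. if w = u then 1 else 0)"

definition tJ :: "'a::linorder set \<Rightarrow> ('a, 'r::comm_ring_1) ncpoly" where
  "tJ J = nc_monom (sorted_list_of_set J)"

text \<open>Position (1-based) of an element i in J.\<close>
definition pos :: "'a::linorder set \<Rightarrow> 'a \<Rightarrow> nat" where
  "pos J i = card {j \<in> J. j \<le> i}"

text \<open>ell_J(I) = sum_{nu=1}^{#I} (alpha_nu - nu), where the nu-th smallest element
of I is the alpha_nu-th smallest element of J.\<close>
definition ell :: "'a::linorder set \<Rightarrow> 'a set \<Rightarrow> nat" where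
  "ell J I = (\<Sum>\<nu><card I. pos J (sorted_list_of_set I ! \<nu>) - (\<nu> + 1))"

definition tau_minus :: "'r::comm_ring_1 \<Rightarrow> 'a::linorder set \<Rightarrow> ('a, 'r) ncpoly" where
  "tau_minus q J = (\<lambda>w. \<Sum>I\<in>{I. I \<subseteq> J \<and> odd (card I)}.
      (-1) ^ ell J I * (- q) ^ ((card I - 1) div 2) * tJ (J - I) w)"

definition tau_plus :: "'r::comm_ring_1 \<Rightarrow> 'a::linorder set \<Rightarrow> ('a, 'r) ncpoly" where
  "tau_plus q J = (\<lambda>w. \<Sum>I\<in>{I. I \<subseteq> J \<and> even (card I)}.
      (-1) ^ ell J I * (- q) ^ (card I div 2) * tJ (J - I) w)"

end

theory Submission
  imports Defs
begin

lemma sum_lessThan_add: "(\<Sum>i<m+(n::nat). f i) = (\<Sum>i<m. f i) + (\<Sum>i<n. f (m+i))"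
  by (induction n) (auto simp: add.assoc)

lemma sorted_append_sets:
  fixes X Y :: "'a::linorder set"
  assumes "finite X" "finite Y" "\<forall>x\<in>X. \<forall>y\<in>Y. x < y"
  shows "sorted_list_of_set (X \<union> Y) = sorted_list_of_set X @ sorted_list_of_set Y"
proof -
  have d: "X \<inter> Y = {}" using assms(3) by auto
  show ?thesis
    apply (subst sorted_list_of_set_unique[symmetric])
    using assms d by (auto simp: sorted_wrt_append card_Un_disjoint)
qed

lemma nc_mult_monom: "nc_mult (nc_monom u) (nc_monom v) = (nc_monom (u @ v) :: ('a,'r::comm_ring_1) ncpoly)"
proof
  fix w :: "'a list"
  have "nc_mult (nc_monom u) (nc_monom v) w = (\<Sum>i\<le>length w. (if i = length u \<and> w = u @ v then 1 else 0 :: 'r))"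
    unfolding nc_mult_def nc_monom_def
    apply (rule sum.cong[OF refl])
    by auto
  also have "\<dots> = (nc_monom (u @ v) w :: 'r)"
    by (auto simp: nc_monom_def)
  finally show "nc_mult (nc_monom u) (nc_monom v) w = (nc_monom (u @ v) w :: 'r)" .
qed

lemma nc_mult_sums:
  "nc_mult (\<lambda>w. \<Sum>a\<in>P. c a * F a w) (\<lambda>w. \<Sum>b\<in>Q. d b * G b w) w
   = (\<Sum>a\<in>P. \<Sum>b\<in>Q. c a * d b * nc_mult (F a) (G b) w)"
  unfolding nc_mult_def
  apply (simp add: sum_product sum_distrib_left mult_ac)
  apply (subst sum.swap[of _ Q])
  apply (subst sum.swap)
  by (rule sum.swap)

lemma pos_nth:
  fixes B :: "'a::linorder set"
  assumes "finite B" "m < card B"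
  shows "pos B (sorted_list_of_set B ! m) = Suc m"
proof -
  let ?L = "sorted_list_of_set B"
  have sw: "sorted_wrt (<) ?L" and len: "length ?L = card B" and st: "set ?L = B" using assms by auto
  have "{j\<in>B. j \<le> ?L ! m} = (\<lambda>k. ?L ! k) ` {..m}"
  proof (rule set_eqI, rule iffI)
    fix j assume "j \<in> {j\<in>B. j \<le> ?L ! m}"
    then have "j \<in> set ?L" "j \<le> ?L ! m" using st by auto
    then obtain k where k: "k < length ?L" "j = ?L ! k" "j \<le> ?L ! m" by (auto simp: in_set_conv_nth)
    have "k \<le> m"
    proof (rule ccontr)
      assume "\<not> k \<le> m" then have "?L ! m < ?L ! k" using sorted_wrt_nth_less[OF sw, of m k] k by auto
      then show False using k by auto
    qed
    then show "j \<in> (\<lambda>k. ?L ! k) ` {..m}" using k by auto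
  next
    fix j assume "j \<in> (\<lambda>k. ?L ! k) ` {..m}"
    then obtain k where k: "k \<le> m" "j = ?L ! k" by auto
    have "j \<le> ?L ! m" using k sorted_wrt_nth_less[OF sw, of k m] assms len
      by (cases "k = m") auto
    moreover have "j \<in> B" using k assms len st by (metis le_less_trans nth_mem)
    ultimately show "j \<in> {j\<in>B. j \<le> ?L ! m}" by auto
  qed
  moreover have "inj_on (\<lambda>k. ?L ! k) {..m}"
    using assms len distinct_sorted_list_of_set[of B]
    by (auto simp: inj_on_def nth_eq_iff_index_eq)
  ultimately show ?thesis unfolding pos_def by (simp add: card_image)
qed

lemma ell_split:
  fixes J' J'' A B :: "'a::linorder set"
  assumes fin: "finite J'" "finite J''" and lt: "\<forall>x\<in>J'. \<forall>y\<in>J''. x < y"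
    and AB: "A \<subseteq> J'" "B \<subseteq> J''"
  shows "ell (J' \<union> J'') (A \<union> B) = ell J' A + ell J'' B + card B * (card J' - card A)"
proof -
  let ?J = "J' \<union> J''"
  have fA: "finite A" and fB: "finite B" using finite_subset[OF AB(1) fin(1)] finite_subset[OF AB(2) fin(2)] .
  have ltAB: "\<forall>x\<in>A. \<forall>y\<in>B. x < y" using lt AB by auto
  have disj: "A \<inter> B = {}" using ltAB by auto
  let ?LA = "sorted_list_of_set A" and ?LB = "sorted_list_of_set B"
  have L: "sorted_list_of_set (A \<union> B) = ?LA @ ?LB" using sorted_append_sets[OF fA fB ltAB] .
  have cAB: "card (A \<union> B) = card A + card B" using card_Un_disjoint[OF fA fB disj] .
  have posA: "pos ?J x = pos J' x" if "x \<in> J'" for x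
  proof -
    have "{j \<in> ?J. j \<le> x} = {j \<in> J'. j \<le> x}" using lt that by (auto, meson leD)
    then show ?thesis unfolding pos_def by simp
  qed
  have posB: "pos ?J x = card J' + pos J'' x" if "x \<in> J''" for x
  proof -
    have "{j \<in> ?J. j \<le> x} = J' \<union> {j \<in> J''. j \<le> x}" using lt that by (auto intro: less_imp_le)
    moreover have "J' \<inter> {j \<in> J''. j \<le> x} = {}" using lt by blast
    ultimately show ?thesis unfolding pos_def using fin by (simp add: card_Un_disjoint)
  qed
  have aJ: "card A \<le> card J'" using card_mono[OF fin(1) AB(1)] .
  have "ell ?J (A \<union> B) = (\<Sum>\<nu><card A + card B. pos ?J ((?LA @ ?LB) ! \<nu>) - (\<nu> + 1))"
    unfolding ell_def L cAB ..
  also have "\<dots> = (\<Sum>\<nu><card A. pos ?J ((?LA @ ?LB) ! \<nu>) - (\<nu> + 1))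
      + (\<Sum>\<mu><card B. pos ?J ((?LA @ ?LB) ! (card A + \<mu>)) - (card A + \<mu> + 1))"
    by (rule sum_lessThan_add)
  also have "(\<Sum>\<nu><card A. pos ?J ((?LA @ ?LB) ! \<nu>) - (\<nu> + 1)) = ell J' A"
    unfolding ell_def
  proof (rule sum.cong[OF refl])
    fix \<nu> assume "\<nu> \<in> {..<card A}"
    then have "\<nu> < length ?LA" using fA by simp
    moreover then have "?LA ! \<nu> \<in> set ?LA" by (rule nth_mem)
    then have "?LA ! \<nu> \<in> J'" using AB fA by auto
    ultimately show "pos ?J ((?LA @ ?LB) ! \<nu>) - (\<nu> + 1) = pos J' (?LA ! \<nu>) - (\<nu> + 1)"
      by (simp add: nth_append posA)
  qed
  also have "(\<Sum>\<mu><card B. pos ?J ((?LA @ ?LB) ! (card A + \<mu>)) - (card A + \<mu> + 1))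
     = (\<Sum>\<mu><card B. (card J' - card A) + (pos J'' (?LB ! \<mu>) - (\<mu> + 1)))"
  proof (rule sum.cong[OF refl])
    fix \<mu> assume m: "\<mu> \<in> {..<card B}"
    then have ml: "\<mu> < length ?LB" using fB by simp
    then have "?LB ! \<mu> \<in> set ?LB" by (rule nth_mem)
    then have xB: "?LB ! \<mu> \<in> B" using fB by simp
    then have xJ: "?LB ! \<mu> \<in> J''" using AB by auto
    have "pos B (?LB ! \<mu>) = Suc \<mu>" using pos_nth[OF fB] m by simp
    moreover have "pos B (?LB ! \<mu>) \<le> pos J'' (?LB ! \<mu>)"
      unfolding pos_def using AB fin by (intro card_mono) auto
    ultimately have ge: "Suc \<mu> \<le> pos J'' (?LB ! \<mu>)" by simp
    have "(?LA @ ?LB) ! (card A + \<mu>) = ?LB ! \<mu>" using fA by (simp add: nth_append)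
    then show "pos ?J ((?LA @ ?LB) ! (card A + \<mu>)) - (card A + \<mu> + 1)
       = (card J' - card A) + (pos J'' (?LB ! \<mu>) - (\<mu> + 1))"
      using posB[OF xJ] ge aJ by simp
  qed
  also have "\<dots> = card B * (card J' - card A) + ell J'' B"
    unfolding ell_def by (simp add: sum.distrib)
  finally show ?thesis by simp
qed

lemma sq_m1 [simp]: "((-1::'a::ring_1)^x)^2 = 1"
proof -
  have "((-1::'a)^x)^2 = ((-1)^2)^x" by (metis power_mult mult.commute)
  then show ?thesis by simp
qed

lemma sq_m1' [simp]: "(((-1::'a::ring_1)^x)^y)^2 = 1"
  by (metis power_mult sq_m1)

lemma coef_plus:
  fixes q :: "'r::comm_ring_1" and a b n eA eB :: nat
  assumes "a \<le> n"
  shows "(if even (a+b) then (-1)^(eA + eB + b*(n-a)) * (-q)^((a+b) div 2) else 0)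
   = (if even a then (-1)^eA*(-q)^(a div 2) else 0) * (if even b then (-1)^eB*(-q)^(b div 2) else 0)
     + (-1)^n * q * ((if odd a then (-1)^eA*(-q)^((a-1) div 2) else 0) * (if odd b then (-1)^eB*(-q)^((b-1) div 2) else 0))"
proof -
  obtain d where n: "n = a + d" using assms le_Suc_ex by blast
  show ?thesis
  proof (cases "even a")
    case True
    then obtain k where a: "a = 2*k" by blast
    show ?thesis
    proof (cases "even b")
      case True
      then obtain l where b: "b = 2*l" by blast
      show ?thesis unfolding a b n by (simp add: power_add power_mult mult_ac)
    next
      case False
      then obtain l where b: "b = 2*l+1" using oddE by blast
      show ?thesis unfolding a b n by simp
    qed
  next
    case False
    then obtain k where a: "a = 2*k+1" using oddE by blast
    show ?thesis
    proof (cases "even b")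
      case True
      then obtain l where b: "b = 2*l" by blast
      show ?thesis unfolding a b n by simp
    next
      case False
      then obtain l where b: "b = 2*l+1" using oddE by blast
      have "(2*k+1+(2*l+1)) div 2 = k + l + 1" by simp
      then show ?thesis unfolding a b n by (simp add: power_add power_mult mult_ac)
    qed
  qed
qed

lemma coef_minus:
  fixes q :: "'r::comm_ring_1" and a b n eA eB :: nat
  assumes "a \<le> n"
  shows "(if odd (a+b) then (-1)^(eA + eB + b*(n-a)) * (-q)^((a+b-1) div 2) else 0)
   = (if odd a then (-1)^eA*(-q)^((a-1) div 2) else 0) * (if even b then (-1)^eB*(-q)^(b div 2) else 0)
     + (-1)^n * ((if even a then (-1)^eA*(-q)^(a div 2) else 0) * (if odd b then (-1)^eB*(-q)^((b-1) div 2) else 0))"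
proof -
  obtain d where n: "n = a + d" using assms le_Suc_ex by blast
  show ?thesis
  proof (cases "even a")
    case True
    then obtain k where a: "a = 2*k" by blast
    show ?thesis
    proof (cases "even b")
      case True
      then obtain l where b: "b = 2*l" by blast
      show ?thesis unfolding a b n by simp
    next
      case False
      then obtain l where b: "b = 2*l+1" using oddE by blast
      have "(2*k+(2*l+1) - 1) div 2 = k + l" by simp
      then show ?thesis unfolding a b n by (simp add: power_add power_mult mult_ac)
    qed
  next
    case False
    then obtain k where a: "a = 2*k+1" using oddE by blast
    show ?thesis
    proof (cases "even b")
      case True
      then obtain l where b: "b = 2*l" by blast
      have "(2*k+1+2*l - 1) div 2 = k + l" by simp
      then show ?thesis unfolding a b n by (simp add: power_add power_mult mult_ac)
    next
      case False
      then obtain l where b: "b = 2*l+1" using oddE by blast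
      show ?thesis unfolding a b n by simp
    qed
  qed
qed

definition cp :: "'r::comm_ring_1 \<Rightarrow> 'a::linorder set \<Rightarrow> 'a set \<Rightarrow> 'r" where
  "cp q K I = (if even (card I) then (-1)^ell K I * (-q)^(card I div 2) else 0)"
definition cm :: "'r::comm_ring_1 \<Rightarrow> 'a::linorder set \<Rightarrow> 'a set \<Rightarrow> 'r" where
  "cm q K I = (if odd (card I) then (-1)^ell K I * (-q)^((card I - 1) div 2) else 0)"

lemma tau_plus_Pow:
  assumes "finite K"
  shows "tau_plus q K = (\<lambda>w. \<Sum>I\<in>Pow K. cp q K I * tJ (K - I) w)"
proof
  fix w
  have e: "{I. I \<subseteq> K \<and> even (card I)} = {I\<in>Pow K. even (card I)}" by auto
  show "tau_plus q K w = (\<Sum>I\<in>Pow K. cp q K I * tJ (K - I) w)"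
  proof -
    have "tau_plus q K w = (\<Sum>I\<in>{I\<in>Pow K. even (card I)}. (-1) ^ ell K I * (- q) ^ (card I div 2) * tJ (K - I) w)"
      by (simp only: tau_plus_def e)
    also have "\<dots> = (\<Sum>I\<in>Pow K. if even (card I) then (-1) ^ ell K I * (- q) ^ (card I div 2) * tJ (K - I) w else 0)"
      by (rule sum.inter_filter) (simp add: assms)
    also have "\<dots> = (\<Sum>I\<in>Pow K. cp q K I * tJ (K - I) w)"
      by (rule sum.cong) (auto simp: cp_def)
    finally show ?thesis .
  qed
qed

lemma tau_minus_Pow:
  assumes "finite K"
  shows "tau_minus q K = (\<lambda>w. \<Sum>I\<in>Pow K. cm q K I * tJ (K - I) w)"
proof
  fix w
  have e: "{I. I \<subseteq> K \<and> odd (card I)} = {I\<in>Pow K. odd (card I)}" by auto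
  show "tau_minus q K w = (\<Sum>I\<in>Pow K. cm q K I * tJ (K - I) w)"
  proof -
    have "tau_minus q K w = (\<Sum>I\<in>{I\<in>Pow K. odd (card I)}. (-1) ^ ell K I * (- q) ^ ((card I - 1) div 2) * tJ (K - I) w)"
      by (simp only: tau_minus_def e)
    also have "\<dots> = (\<Sum>I\<in>Pow K. if odd (card I) then (-1) ^ ell K I * (- q) ^ ((card I - 1) div 2) * tJ (K - I) w else 0)"
      by (rule sum.inter_filter) (simp add: assms)
    also have "\<dots> = (\<Sum>I\<in>Pow K. cm q K I * tJ (K - I) w)"
      by (rule sum.cong) (auto simp: cm_def)
    finally show ?thesis .
  qed
qed

lemma sum_Pow_split:
  assumes "finite J'" "finite J''" "J' \<inter> J'' = {}"
  shows "(\<Sum>I\<in>Pow (J' \<union> J''). g I) = (\<Sum>A\<in>Pow J'. \<Sum>B\<in>Pow J''. g (A \<union> B))"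
proof -
  have im: "Pow (J' \<union> J'') = (\<lambda>(A,B). A \<union> B) ` (Pow J' \<times> Pow J'')"
  proof (rule set_eqI, rule iffI)
    fix I assume "I \<in> Pow (J' \<union> J'')"
    then have "I = (I \<inter> J') \<union> (I \<inter> J'')" "(I \<inter> J', I \<inter> J'') \<in> Pow J' \<times> Pow J''" by auto
    then show "I \<in> (\<lambda>(A,B). A \<union> B) ` (Pow J' \<times> Pow J'')" by (metis (no_types, lifting) case_prod_conv image_eqI)
  qed auto
  have inj: "inj_on (\<lambda>(A,B). A \<union> B) (Pow J' \<times> Pow J'')"
  proof (rule inj_onI, clarsimp)
    fix A B A' B' assume h: "A \<subseteq> J'" "B \<subseteq> J''" "A' \<subseteq> J'" "B' \<subseteq> J''" "A \<union> B = A' \<union> B'"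
    have "A = (A \<union> B) \<inter> J'" "A' = (A' \<union> B') \<inter> J'" "B = (A \<union> B) \<inter> J''" "B' = (A' \<union> B') \<inter> J''"
      using h assms(3) by auto
    then show "A = A' \<and> B = B'" using h(5) by metis
  qed
  show ?thesis
    unfolding im sum.reindex[OF inj]
    by (simp add: sum.cartesian_product case_prod_beta)
qed

theorem lemma3p1:
  fixes S :: "'a::linorder set" and q :: "'r::comm_ring_1"
    and J J' J'' :: "'a set"
  assumes "finite S"
    and "J \<subseteq> S" and "J' \<subseteq> S" and "J'' \<subseteq> S"
    and "J = J' \<union> J''"
    and "\<forall>j'\<in>J'. \<forall>j''\<in>J''. j' < j''"
  shows "tau_plus q J = nc_add (nc_mult (tau_plus q J') (tau_plus q J''))
             (nc_smult ((-1) ^ card J' * q) (nc_mult (tau_minus q J') (tau_minus q J'')))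
       \<and> tau_minus q J = nc_add (nc_mult (tau_minus q J') (tau_plus q J''))
             (nc_smult ((-1) ^ card J') (nc_mult (tau_plus q J') (tau_minus q J'')))"
proof -
  have f1: "finite J'" and f2: "finite J''" and fJ: "finite J"
    using assms finite_subset by blast+
  have lt: "\<forall>x\<in>J'. \<forall>y\<in>J''. x < y" using assms(6) .
  have disj: "J' \<inter> J'' = {}" using lt by auto
  have tJ_split: "tJ (J - (A \<union> B)) w = nc_mult (tJ (J' - A)) (tJ (J'' - B)) w"
    if "A \<subseteq> J'" "B \<subseteq> J''" for A B w
  proof -
    have "J - (A \<union> B) = (J' - A) \<union> (J'' - B)" using assms(5) disj that by auto
    moreover have "sorted_list_of_set ((J' - A) \<union> (J'' - B))
        = sorted_list_of_set (J' - A) @ sorted_list_of_set (J'' - B)"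
      using sorted_append_sets[of "J' - A" "J'' - B"] f1 f2 lt by auto
    ultimately show ?thesis unfolding tJ_def by (simp add: nc_mult_monom)
  qed
  have cards: "card (A \<union> B) = card A + card B" "card A \<le> card J'"
    if "A \<subseteq> J'" "B \<subseteq> J''" for A B
  proof -
    have fA: "finite A" using finite_subset[OF that(1) f1] .
    have fB: "finite B" using finite_subset[OF that(2) f2] .
    have "A \<inter> B = {}" using disj that by blast
    then show "card (A \<union> B) = card A + card B" using card_Un_disjoint[OF fA fB] by simp
    show "card A \<le> card J'" using card_mono[OF f1 that(1)] .
  qed
  have ells: "ell J (A \<union> B) = ell J' A + ell J'' B + card B * (card J' - card A)"
    if "A \<subseteq> J'" "B \<subseteq> J''" for A B
    unfolding assms(5) using ell_split[OF f1 f2 lt that] .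
  have cpJ: "cp q J (A \<union> B) = cp q J' A * cp q J'' B + (-1)^card J' * q * (cm q J' A * cm q J'' B)"
    if "A \<subseteq> J'" "B \<subseteq> J''" for A B
    unfolding cp_def cm_def cards[OF that] ells[OF that] by (rule coef_plus[OF cards(2)[OF that]])
  have cmJ: "cm q J (A \<union> B) = cm q J' A * cp q J'' B + (-1)^card J' * (cp q J' A * cm q J'' B)"
    if "A \<subseteq> J'" "B \<subseteq> J''" for A B
    unfolding cp_def cm_def cards[OF that] ells[OF that] by (rule coef_minus[OF cards(2)[OF that]])
  have P: "tau_plus q J = nc_add (nc_mult (tau_plus q J') (tau_plus q J''))
             (nc_smult ((-1) ^ card J' * q) (nc_mult (tau_minus q J') (tau_minus q J'')))"
  proof
    fix w
    have "tau_plus q J w = (\<Sum>A\<in>Pow J'. \<Sum>B\<in>Pow J''. cp q J (A \<union> B) * tJ (J - (A \<union> B)) w)"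
      unfolding tau_plus_Pow[OF fJ] using sum_Pow_split[OF f1 f2 disj] assms(5) by simp
    also have "\<dots> = (\<Sum>A\<in>Pow J'. \<Sum>B\<in>Pow J''. cp q J' A * cp q J'' B * nc_mult (tJ (J' - A)) (tJ (J'' - B)) w
        + (-1)^card J' * q * (cm q J' A * cm q J'' B * nc_mult (tJ (J' - A)) (tJ (J'' - B)) w))"
      by (intro sum.cong refl) (simp add: cpJ tJ_split algebra_simps)
    also have "\<dots> = nc_add (nc_mult (tau_plus q J') (tau_plus q J''))
             (nc_smult ((-1) ^ card J' * q) (nc_mult (tau_minus q J') (tau_minus q J''))) w"
      unfolding tau_plus_Pow[OF f1] tau_plus_Pow[OF f2] tau_minus_Pow[OF f1] tau_minus_Pow[OF f2]
        nc_add_def nc_smult_def nc_mult_sums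
      by (simp add: sum.distrib sum_distrib_left)
    finally show "tau_plus q J w = \<dots>" .
  qed
  have M: "tau_minus q J = nc_add (nc_mult (tau_minus q J') (tau_plus q J''))
             (nc_smult ((-1) ^ card J') (nc_mult (tau_plus q J') (tau_minus q J'')))"
  proof
    fix w
    have "tau_minus q J w = (\<Sum>A\<in>Pow J'. \<Sum>B\<in>Pow J''. cm q J (A \<union> B) * tJ (J - (A \<union> B)) w)"
      unfolding tau_minus_Pow[OF fJ] using sum_Pow_split[OF f1 f2 disj] assms(5) by simp
    also have "\<dots> = (\<Sum>A\<in>Pow J'. \<Sum>B\<in>Pow J''. cm q J' A * cp q J'' B * nc_mult (tJ (J' - A)) (tJ (J'' - B)) w
        + (-1)^card J' * (cp q J' A * cm q J'' B * nc_mult (tJ (J' - A)) (tJ (J'' - B)) w))"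
      by (intro sum.cong refl) (simp add: cmJ tJ_split algebra_simps)
    also have "\<dots> = nc_add (nc_mult (tau_minus q J') (tau_plus q J''))
             (nc_smult ((-1) ^ card J') (nc_mult (tau_plus q J') (tau_minus q J''))) w"
      unfolding tau_plus_Pow[OF f1] tau_plus_Pow[OF f2] tau_minus_Pow[OF f1] tau_minus_Pow[OF f2]
        nc_add_def nc_smult_def nc_mult_sums
      by (simp add: sum.distrib sum_distrib_left)
    finally show "tau_minus q J w = \<dots>" .
  qed
  show ?thesis using P M by blast
qed

end
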